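(* Let $k\in\mathbb Z_{\ge1}$ and $a\in\mathbb R_{>0}$. If $a\notin\mathbb J_k:=\{\tfrac{i}{j+1}:i\in\mathbb Z_{\ge1},\ j\in\mathbb Z_{\ge0},\ i+j=k\}=\{\tfrac k1,\tfrac{k-1}{2},\dots,\tfrac1k\}$, then $\Gamma^{a-\delta}_k=\Gamma^{a+\delta}_k$ for all sufficiently small $\delta>0$.
   Context: For $b>0$, $\Gamma^b=(\Gamma^b_0,\Gamma^b_1,\dots)$ is the unit-step lattice path in $\mathbb Z_{\ge0}^2$ which starts at $(0,0)$, lies on or above the line $L_b$ through $(0,-1)$ and $(b,0)$, and steps right (adds $(1,0)$) whenever possible and otherwise steps up (adds $(0,1)$). *)

theory Defs
  imports Complex_Main
begin

text \<open>The point (x,y) lies on or above the line L_b through (0,-1) and (b,0),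
  i.e. the line y = x/b - 1.\<close>
definition above_line :: "real \<Rightarrow> nat \<times> nat \<Rightarrow> bool" where
  "above_line b p \<longleftrightarrow> real (snd p) \<ge> real (fst p) / b - 1"

text \<open>Gamma b n is the n-th point of the lattice path Gamma^b: start at (0,0),
  step right whenever the new point stays on or above L_b, otherwise step up.\<close>
fun Gamma :: "real \<Rightarrow> nat \<Rightarrow> nat \<times> nat" where
  "Gamma b 0 = (0, 0)"
| "Gamma b (Suc n) =
     (let (x, y) = Gamma b n in
      if above_line b (x + 1, y) then (x + 1, y) else (x, y + 1))"

definition J :: "nat \<Rightarrow> real set" where
  "J k = {real i / real (j + 1) | i j. i \<ge> 1 \<and> i + j = k}"

end

theory Submission
  imports Defs
begin

definition PP :: "real \<Rightarrow> nat \<Rightarrow> nat \<Rightarrow> bool" where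
  "PP b n x \<longleftrightarrow> real x \<le> b * (real n - real x + 1)"

lemma Gamma_char:
  assumes b: "b > 0"
  shows "fst (Gamma b n) + snd (Gamma b n) = n \<and> (\<forall>x\<le>n. PP b n x \<longleftrightarrow> x \<le> fst (Gamma b n))"
proof (induction n)
  case 0
  then show ?case using b by (simp add: PP_def)
next
  case (Suc n)
  obtain g h where gh: "Gamma b n = (g, h)" by force
  have hn: "h = n - g" "g \<le> n" using Suc gh by auto
  have IH: "\<And>x. x \<le> n \<Longrightarrow> PP b n x \<longleftrightarrow> x \<le> g" using Suc gh by auto
  have AL: "above_line b (g+1, h) \<longleftrightarrow> PP b (Suc n) (g+1)"
    using b hn by (simp add: above_line_def PP_def of_nat_diff field_simps)
  have mono: "PP b (Suc n) x" if "x \<le> g" for x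
  proof -
    have "PP b n x" using IH[of x] that hn by auto
    then show ?thesis using b by (simp add: PP_def algebra_simps)
  qed
  have anti: "\<not> PP b (Suc n) x" if "x \<ge> g + 2" "x \<le> Suc n" for x
  proof -
    have "\<not> PP b n (x - 1)" using IH[of "x-1"] that by auto
    then have "real (x-1) > b * (real n - real (x-1) + 1)" by (simp add: PP_def)
    then have "real x - 1 > b * (real (Suc n) - real x + 1)" using that by (simp add: of_nat_diff)
    then show ?thesis by (simp add: PP_def)
  qed
  show ?case
  proof (cases "above_line b (g+1, h)")
    case True
    then have G: "Gamma b (Suc n) = (g+1, h)" using gh by simp
    have "\<forall>x\<le>Suc n. PP b (Suc n) x \<longleftrightarrow> x \<le> g + 1"
    proof (intro allI impI)
      fix x assume "x \<le> Suc n"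
      then consider "x \<le> g" | "x = g + 1" | "x \<ge> g + 2" by linarith
      then show "PP b (Suc n) x \<longleftrightarrow> x \<le> g + 1"
        by cases (use True AL mono anti \<open>x \<le> Suc n\<close> in auto)
    qed
    then show ?thesis unfolding G using hn by simp
  next
    case False
    then have G: "Gamma b (Suc n) = (g, h+1)" using gh by simp
    have "\<forall>x\<le>Suc n. PP b (Suc n) x \<longleftrightarrow> x \<le> g"
    proof (intro allI impI)
      fix x assume "x \<le> Suc n"
      then consider "x \<le> g" | "x = g + 1" | "x \<ge> g + 2" by linarith
      then show "PP b (Suc n) x \<longleftrightarrow> x \<le> g"
        by cases (use False AL mono anti \<open>x \<le> Suc n\<close> in auto)
    qed
    then show ?thesis unfolding G using hn by simp
  qed
qed

theorem mainTheorem16: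
  fixes k :: nat and a :: real
  assumes "k \<ge> 1" and "a > 0" and "a \<notin> J k"
  shows "\<exists>\<epsilon>>0. \<forall>\<delta>. 0 < \<delta> \<and> \<delta> < \<epsilon> \<longrightarrow> Gamma (a - \<delta>) k = Gamma (a + \<delta>) k"
proof -
  define t where "t x = real x / real (k - x + 1)" for x
  define d where "d x = \<bar>a - t x\<bar>" for x
  define \<epsilon> where "\<epsilon> = Min (insert a (d ` {1..k}))"
  have tJ: "t x \<in> J k" if "1 \<le> x" "x \<le> k" for x
    unfolding J_def t_def using that by (intro CollectI exI[of _ x] exI[of _ "k - x"]) auto
  have dpos: "d x > 0" if "1 \<le> x" "x \<le> k" for x
    using tJ[OF that] assms(3) unfolding d_def by auto
  have epos: "\<epsilon> > 0" unfolding \<epsilon>_def using dpos assms(2) by auto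
  have ea: "\<epsilon> \<le> a" unfolding \<epsilon>_def by simp
  have ed: "\<epsilon> \<le> d x" if "1 \<le> x" "x \<le> k" for x unfolding \<epsilon>_def using that by (intro Min_le) auto
  have PPt: "PP b k x \<longleftrightarrow> t x \<le> b" if "1 \<le> x" "x \<le> k" for x b
  proof -
    have "real (k - x + 1) > 0" by simp
    moreover have "real (k - x + 1) = real k - real x + 1" using that by (simp add: of_nat_diff)
    ultimately show ?thesis unfolding PP_def t_def by (simp add: pos_divide_le_eq mult.commute add.commute)
  qed
  show ?thesis
  proof (intro exI[of _ \<epsilon>] conjI allI impI epos)
    fix \<delta> assume h: "0 < \<delta> \<and> \<delta> < \<epsilon>"
    have b1: "a - \<delta> > 0" using h ea by simp
    have b2: "a + \<delta> > 0" using h assms(2) by simp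
    have eq: "PP (a - \<delta>) k x \<longleftrightarrow> PP (a + \<delta>) k x" if "x \<le> k" for x
    proof (cases "x = 0")
      case True then show ?thesis using b1 b2 by (simp add: PP_def)
    next
      case False
      then have x1: "1 \<le> x" by simp
      have "\<delta> < d x" using h ed[OF x1 that] by simp
      then have "t x \<le> a - \<delta> \<longleftrightarrow> t x \<le> a + \<delta>" using h unfolding d_def by auto
      then show ?thesis using PPt[OF x1 that] by simp
    qed
    note c1 = Gamma_char[OF b1, of k] and c2 = Gamma_char[OF b2, of k]
    have "fst (Gamma (a - \<delta>) k) = fst (Gamma (a + \<delta>) k)"
    proof -
      have "\<And>x. x \<le> k \<Longrightarrow> x \<le> fst (Gamma (a - \<delta>) k) \<longleftrightarrow> x \<le> fst (Gamma (a + \<delta>) k)"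
        using c1 c2 eq by blast
      moreover have "fst (Gamma (a - \<delta>) k) \<le> k" "fst (Gamma (a + \<delta>) k) \<le> k" using c1 c2 by linarith+
      ultimately show ?thesis by (meson le_antisym order_refl)
    qed
    then show "Gamma (a - \<delta>) k = Gamma (a + \<delta>) k" using c1 c2 by (metis add_left_cancel prod_eq_iff)
  qed
qed

end
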